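(* Let $r,s,j$ be nonnegative integers with $j\le r$. Then $$X_+^{\,r+s-j}\,Y_+^{\,r-j}\,m_{1^j}(\mathbf{xy})\Big|_{\mathbf y=\mathbf x}=\sum_{j\le i\le r}\binom{i}{j}\binom{2(r-i)+s}{r-i}(r-j)!\,(r+s-j)!\;m_{2^i1^{2(r-i)+s}}(\mathbf x),$$ where $X_+=\sum_{i\ge1}(x_i-x_i^2\partial/\partial x_i)$, $Y_+=\sum_{i\ge1}(y_i-y_i^2\partial/\partial y_i)$ act on formal power series in $\mathbf x=(x_1,x_2,\dots)$, $\mathbf y=(y_1,y_2,\dots)$, and $m_{1^j}(\mathbf{xy})=\sum_{\beta\subset\mathbb N_{>0},|\beta|=j}\prod_{k\in\beta}x_ky_k$.
   Context: $m_\mu(\mathbf x)$ denotes the monomial symmetric function indexed by the partition $\mu$ (sum of all distinct monomials $x_{k_1}^{\mu_1}x_{k_2}^{\mu_2}\cdots$ with distinct indices); $2^i1^t$ is the partition with $i$ parts equal to $2$ and $t$ parts equal to $1$; $m_{1^0}=1$. *)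

theory Defs
  imports Main "HOL-Library.Multiset"
begin

text \<open>Formal power series with integer coefficients in countably many variables
  x_0, x_1, ... are represented by their coefficient functions: an exponent vector
  (monomial) is a function nat => nat; only finitely supported exponent vectors
  are meaningful monomials.  A series in the two sets of variables x and y is a
  function of two exponent vectors (exponent of x, exponent of y).\<close>

type_synonym fps_inf = "(nat \<Rightarrow> nat) \<Rightarrow> int"
type_synonym fps_inf2 = "(nat \<Rightarrow> nat) \<Rightarrow> (nat \<Rightarrow> nat) \<Rightarrow> int"

definition supp :: "(nat \<Rightarrow> nat) \<Rightarrow> nat set" where
  "supp a = {k. a k \<noteq> 0}"

definition mulvar :: "nat \<Rightarrow> fps_inf \<Rightarrow> fps_inf" where
  "mulvar i f a = (if 1 \<le> a i then f (a(i := a i - 1)) else 0)"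

definition pderivvar :: "nat \<Rightarrow> fps_inf \<Rightarrow> fps_inf" where
  "pderivvar i f a = int (a i + 1) * f (a(i := a i + 1))"

text \<open>At the coefficient of x^a,
  only the (finitely many) indices i with a i > 0 contribute, since both
  x_i * (...) and x_i^2 * (...) have vanishing coefficient when a i = 0.\<close>
definition Xplus :: "fps_inf \<Rightarrow> fps_inf" where
  "Xplus f a = (\<Sum>i\<in>supp a. mulvar i f a - mulvar i (mulvar i (pderivvar i f)) a)"

definition Xop :: "fps_inf2 \<Rightarrow> fps_inf2" where
  "Xop F = (\<lambda>a b. Xplus (\<lambda>a'. F a' b) a)"

definition Yop :: "fps_inf2 \<Rightarrow> fps_inf2" where
  "Yop F = (\<lambda>a b. Xplus (F a) b)"

text \<open>Specialisation y = x: coefficient of x^c is the sum over a + b = c.\<close>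
definition diag_subst :: "fps_inf2 \<Rightarrow> fps_inf" where
  "diag_subst F c = (\<Sum>a\<in>{a. \<forall>k. a k \<le> c k}. F a (\<lambda>k. c k - a k))"

text \<open>Monomial symmetric function m_mu(x), the partition mu given as the multiset of its parts.\<close>
definition msym :: "nat multiset \<Rightarrow> fps_inf" where
  "msym mu a = (if finite (supp a) \<and> image_mset a (mset_set (supp a)) = mu then 1 else 0)"

definition m1_xy :: "nat \<Rightarrow> fps_inf2" where
  "m1_xy j a b = (if a = b \<and> finite (supp a) \<and> (\<forall>k. a k \<le> 1) \<and> card (supp a) = j then 1 else 0)"

end

theory Submission
  imports Defs
begin


definition ind :: "nat set \<Rightarrow> nat \<Rightarrow> nat" where
  "ind D = (\<lambda>k. if k \<in> D then 1 else 0)"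

definition isind :: "(nat \<Rightarrow> nat) \<Rightarrow> bool" where
  "isind a \<longleftrightarrow> finite (supp a) \<and> (\<forall>k. a k \<le> 1)"

lemma supp_ind[simp]: "supp (ind D) = D"
  by (auto simp: supp_def ind_def)

lemma ind_inj[simp]: "ind A = ind B \<longleftrightarrow> A = B"
proof
  assume "ind A = ind B" then have "supp (ind A) = supp (ind B)" by simp
  then show "A = B" by simp
qed simp

lemma isind_ind[simp]: "isind (ind D) \<longleftrightarrow> finite D"
  unfolding isind_def supp_ind by (auto simp: ind_def)

lemma isind_eq: "isind a \<Longrightarrow> a = ind (supp a)"
  unfolding isind_def ind_def supp_def
proof
  fix k assume "finite {k. a k \<noteq> 0} \<and> (\<forall>k. a k \<le> 1)"
  then show "a k = (if k \<in> {k. a k \<noteq> 0} then 1 else 0)"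
    by (metis (mono_tags) le_antisym less_one mem_Collect_eq not_le)
qed

lemma Xplus_formula:
  "Xplus f a = (\<Sum>i\<in>supp a. (2 - int (a i)) * f (a(i := a i - 1)))"
  unfolding Xplus_def
proof (rule sum.cong[OF refl])
  fix i assume i: "i \<in> supp a"
  then have "a i \<ge> 1" by (simp add: supp_def)
  show "mulvar i f a - mulvar i (mulvar i (pderivvar i f)) a =
        (2 - int (a i)) * f (a(i := a i - 1))"
  proof (cases "a i \<ge> 2")
    case True
    have e0: "a i - 1 - 1 + 1 = a i - 1" using True by arith
    have e: "(a(i := a i - 1))(i := a i - 1 - 1 + 1) = a(i := a i - 1)"
      using e0 by simp
    have e1: "Suc (a i - Suc (Suc 0)) = a i - Suc 0" "Suc 0 \<le> a i - Suc 0" using True by arith+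
    show ?thesis using True \<open>a i \<ge> 1\<close>
      by (simp add: mulvar_def pderivvar_def e e1 algebra_simps of_nat_diff)
  next
    case False
    then have "a i = 1" using \<open>a i \<ge> 1\<close> by simp
    then show ?thesis by (simp add: mulvar_def)
  qed
qed

lemma Xplus_zero[simp]: "Xplus (\<lambda>_. 0) = (\<lambda>_. 0)"
  by (rule ext) (simp add: Xplus_formula)

lemma Xpow_zero[simp]: "(Xplus ^^ n) (\<lambda>_. 0) = (\<lambda>_. 0)"
  by (induction n) auto

lemma X_nonind:
  assumes f: "\<forall>a. f a \<noteq> 0 \<longrightarrow> isind a" and a: "\<not> isind a"
  shows "Xplus f a = 0"
  unfolding Xplus_formula
proof (rule sum.neutral, rule ballI)
  fix i assume i: "i \<in> supp a"
  then have ai: "a i \<ge> 1" by (simp add: supp_def)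
  show "(2 - int (a i)) * f (a(i := a i - 1)) = 0"
  proof (cases "a i = 2 \<or> f (a(i := a i - 1)) = 0")
    case True then show ?thesis by auto
  next
    case False
    then have ii: "isind (a(i := a i - 1))" and a2: "a i \<noteq> 2" using f by auto
    then have le: "\<forall>k. (a(i := a i - 1)) k \<le> 1" and fin: "finite (supp (a(i := a i - 1)))"
      by (auto simp: isind_def)
    from le[rule_format, of i] a2 ai have "a i = 1" by simp
    have "\<forall>k. a k \<le> 1"
    proof
      fix k show "a k \<le> 1" using le[rule_format, of k] \<open>a i = 1\<close> by (cases "k = i") auto
    qed
    moreover have "supp a \<subseteq> insert i (supp (a(i := a i - 1)))"
      by (auto simp: supp_def)
    then have "finite (supp a)" using fin finite_subset by blast
    ultimately have "isind a" by (simp add: isind_def)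
    with a show ?thesis by simp
  qed
qed

lemma X_ind:
  assumes "finite G"
  shows "Xplus f (ind G) = (\<Sum>i\<in>G. f (ind (G - {i})))"
  unfolding Xplus_formula supp_ind
proof (rule sum.cong[OF refl])
  fix i assume "i \<in> G"
  then have "(ind G)(i := ind G i - 1) = ind (G - {i})"
    by (auto simp: ind_def)
  then show "(2 - int (ind G i)) * f ((ind G)(i := ind G i - 1)) = f (ind (G - {i}))"
    using \<open>i \<in> G\<close> by (simp add: ind_def)
qed


lemma Xpow:
  assumes f: "\<forall>a. f a \<noteq> 0 \<longrightarrow> isind a"
  shows "(\<forall>a. (Xplus ^^ n) f a \<noteq> 0 \<longrightarrow> isind a) \<and>
         (\<forall>G. finite G \<longrightarrow> (Xplus ^^ n) f (ind G) =
              fact n * (\<Sum>B\<in>{B. B \<subseteq> G \<and> card B + n = card G}. f (ind B)))"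
proof (induction n)
  case 0
  have h: "\<And>G. finite G \<Longrightarrow> {B. B \<subseteq> G \<and> card B = card G} = {G}"
    using card_subset_eq by blast
  show ?case
  proof (intro conjI allI impI)
    fix G :: "nat set" assume "finite G"
    then show "(Xplus ^^ 0) f (ind G) = fact 0 * (\<Sum>B\<in>{B. B \<subseteq> G \<and> card B + 0 = card G}. f (ind B))"
      by (simp only: funpow_0 add_0_right h[OF \<open>finite G\<close>]) simp
  qed (use f in simp)
next
  case (Suc n)
  let ?g = "(Xplus ^^ n) f"
  have g1: "\<forall>a. ?g a \<noteq> 0 \<longrightarrow> isind a" using Suc.IH by blast
  have part1: "\<forall>a. (Xplus ^^ Suc n) f a \<noteq> 0 \<longrightarrow> isind a"
    using X_nonind[OF g1] by auto
  have part2: "(Xplus ^^ Suc n) f (ind G) =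
              fact (Suc n) * (\<Sum>B\<in>{B. B \<subseteq> G \<and> card B + Suc n = card G}. f (ind B))"
    if G: "finite G" for G
  proof -
    let ?S = "{B. B \<subseteq> G \<and> card B + Suc n = card G}"
    let ?phi = "\<lambda>B. f (ind B)"
    have finS: "finite ?S" by (rule finite_subset[of _ "Pow G"]) (use G in auto)
    have Si: "{B. B \<subseteq> G - {i} \<and> card B + n = card (G - {i})} = {B \<in> ?S. i \<notin> B}"
      if i: "i \<in> G" for i
    proof -
      have cG: "card (G - {i}) = card G - 1" and c1: "card G \<ge> 1"
        using G i by (auto simp: card_gt_0_iff Suc_le_eq)
      show ?thesis using cG c1 by auto
    qed
    have "(Xplus ^^ Suc n) f (ind G) = (\<Sum>i\<in>G. ?g (ind (G - {i})))"
      using X_ind[OF G] by simp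
    also have "\<dots> = (\<Sum>i\<in>G. fact n * (\<Sum>B\<in>{B \<in> ?S. i \<notin> B}. ?phi B))"
      using Suc.IH G Si by (intro sum.cong) auto
    also have "\<dots> = fact n * (\<Sum>i\<in>G. (\<Sum>B\<in>{B \<in> ?S. i \<notin> B}. ?phi B))"
      by (simp only: sum_distrib_left)
    also have "\<dots> = fact n * (\<Sum>i\<in>G. \<Sum>B\<in>?S. if i \<notin> B then ?phi B else 0)"
      unfolding sum.inter_filter[OF finS] ..
    also have "\<dots> = fact n * (\<Sum>B\<in>?S. \<Sum>i\<in>G. if i \<notin> B then ?phi B else 0)"
      by (subst sum.swap) simp
    also have "\<dots> = fact n * (\<Sum>B\<in>?S. of_nat (Suc n) * ?phi B)"
    proof -
      have "(\<Sum>i\<in>G. if i \<notin> B then ?phi B else 0) = of_nat (Suc n) * ?phi B" if B: "B \<in> ?S" for B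
      proof -
        have "(\<Sum>i\<in>G. if i \<notin> B then ?phi B else 0) = (\<Sum>i\<in>{i\<in>G. i \<notin> B}. ?phi B)"
          unfolding sum.inter_filter[OF G] ..
        also have "{i\<in>G. i \<notin> B} = G - B" by auto
        also have "card (G - B) = Suc n"
        proof -
          have "B \<subseteq> G" "card B + Suc n = card G" using B by auto
          moreover have "finite B" using \<open>B \<subseteq> G\<close> G finite_subset by blast
          ultimately show ?thesis by (simp add: card_Diff_subset)
        qed
        ultimately show ?thesis by simp
      qed
      then show ?thesis by (intro arg_cong[where f="\<lambda>x. fact n * x"] sum.cong) auto
    qed
    also have "\<dots> = fact (Suc n) * (\<Sum>B\<in>?S. ?phi B)"
      by (simp add: sum_distrib_left algebra_simps)
    finally show ?thesis .
  qed
  show ?case using part1 part2 by blast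
qed


lemma Yop_pow: "(Yop ^^ m) F = (\<lambda>a. (Xplus ^^ m) (F a))"
  by (induction m) (simp_all add: Yop_def)

lemma Xop_pow: "(Xop ^^ n) F = (\<lambda>a b. (Xplus ^^ n) (\<lambda>a'. F a' b) a)"
  by (induction n) (simp_all add: Xop_def)

lemma m1_alt: "m1_xy j a b = (if a = b \<and> isind a \<and> card (supp a) = j then 1 else 0)"
  by (simp add: m1_xy_def isind_def)

lemma m1_nonind: "\<not> isind a \<Longrightarrow> m1_xy j a = (\<lambda>_. 0)"
  by (rule ext) (simp add: m1_alt)

lemma m1_supp: "\<forall>b. m1_xy j a b \<noteq> 0 \<longrightarrow> isind b"
  by (simp add: m1_alt)

lemma Ystage:
  assumes D: "finite D" and be: "finite \<beta>"
  shows "(Xplus ^^ m) (m1_xy j (ind \<beta>)) (ind D) =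
         (if card \<beta> = j \<and> \<beta> \<subseteq> D \<and> card \<beta> + m = card D then fact m else 0)"
proof -
  let ?S = "{B. B \<subseteq> D \<and> card B + m = card D}"
  have "(Xplus ^^ m) (m1_xy j (ind \<beta>)) (ind D) =
        fact m * (\<Sum>B\<in>?S. m1_xy j (ind \<beta>) (ind B))"
    using Xpow[OF m1_supp, of m j "ind \<beta>"] D by blast
  also have "(\<Sum>B\<in>?S. m1_xy j (ind \<beta>) (ind B)) = (\<Sum>B\<in>?S. if \<beta> = B then (if card \<beta> = j then 1 else 0) else 0)"
    using be by (intro sum.cong) (auto simp: m1_alt)
  also have "\<dots> = (if \<beta> \<in> ?S then (if card \<beta> = j then 1 else 0) else 0)"
  proof -
    have "finite ?S" by (rule finite_subset[of _ "Pow D"]) (use D in auto)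
    then show ?thesis by (rule sum.delta')
  qed
  finally show ?thesis by auto
qed

lemma Gstage:
  assumes D: "finite D" and Ga: "finite \<Gamma>"
  shows "(Xplus ^^ n) (\<lambda>a'. (Xplus ^^ m) (m1_xy j a') (ind D)) (ind \<Gamma>) =
         (if j + m = card D \<and> j + n = card \<Gamma> then fact n * fact m * of_nat (card (\<Gamma> \<inter> D) choose j) else 0)"
proof -
  let ?h = "\<lambda>a'. (Xplus ^^ m) (m1_xy j a') (ind D)"
  have hs: "\<forall>a. ?h a \<noteq> 0 \<longrightarrow> isind a" proof (intro allI impI, rule ccontr)
    fix a assume "\<not> isind a" and nz: "?h a \<noteq> 0"
    then show False by (simp add: m1_nonind)
  qed
  let ?S = "{B. B \<subseteq> \<Gamma> \<and> card B + n = card \<Gamma>}"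
  have finS: "finite ?S" by (rule finite_subset[of _ "Pow \<Gamma>"]) (use Ga in auto)
  let ?Q = "\<lambda>B. card B = j \<and> B \<subseteq> D \<and> card B + m = card D"
  have "(Xplus ^^ n) ?h (ind \<Gamma>) = fact n * (\<Sum>B\<in>?S. ?h (ind B))"
    using Xpow[OF hs, of n] Ga by blast
  also have "(\<Sum>B\<in>?S. ?h (ind B)) = (\<Sum>B\<in>?S. if ?Q B then fact m else 0)"
  proof (rule sum.cong[OF refl])
    fix B assume "B \<in> ?S"
    then have "finite B" using Ga finite_subset by auto
    then show "?h (ind B) = (if ?Q B then fact m else 0)" using Ystage[OF D] by simp
  qed
  also have "\<dots> = (\<Sum>B\<in>{B \<in> ?S. ?Q B}. fact m)"
    unfolding sum.inter_filter[OF finS] ..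
  also have "{B \<in> ?S. ?Q B} = (if j + m = card D \<and> j + n = card \<Gamma> then {B. B \<subseteq> \<Gamma> \<inter> D \<and> card B = j} else {})"
    by auto
  finally show ?thesis using n_subsets[of "\<Gamma> \<inter> D" j] Ga by auto
qed

definition GG :: "nat \<Rightarrow> nat \<Rightarrow> nat \<Rightarrow> fps_inf2" where
  "GG n m j = (Xop ^^ n) ((Yop ^^ m) (m1_xy j))"

lemma GG_val:
  "GG n m j a b = (if isind a \<and> isind b \<and> j + m = card (supp b) \<and> j + n = card (supp a)
     then fact n * fact m * of_nat (card (supp a \<inter> supp b) choose j) else 0)"
proof -
  have GG: "GG n m j a b = (Xplus ^^ n) (\<lambda>a'. (Xplus ^^ m) (m1_xy j a') b) a"
    by (simp add: GG_def Xop_pow Yop_pow)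
  show ?thesis
  proof (cases "isind b")
    case False
    have "\<forall>a'. (Xplus ^^ m) (m1_xy j a') b = 0"
      using Xpow[OF m1_supp, of m j] False by blast
    then show ?thesis using GG False by simp
  next
    case True
    note b = True
    show ?thesis
    proof (cases "isind a")
      case False
      have hs: "\<forall>a. (\<lambda>a'. (Xplus ^^ m) (m1_xy j a') b) a \<noteq> 0 \<longrightarrow> isind a" proof (intro allI impI, rule ccontr)
    fix a assume "\<not> isind a" and nz: "(Xplus ^^ m) (m1_xy j a) b \<noteq> 0"
    then show False by (simp add: m1_nonind)
  qed
      show ?thesis using Xpow[OF hs, of n] False GG by auto
    next
      case True
      have fa: "finite (supp a)" and fb: "finite (supp b)" using True b by (auto simp: isind_def)
      have "GG n m j a b = (Xplus ^^ n) (\<lambda>a'. (Xplus ^^ m) (m1_xy j a') (ind (supp b))) (ind (supp a))"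
        using GG isind_eq[OF True] isind_eq[OF b] by metis
      then show ?thesis using Gstage[OF fb fa] True b by simp
    qed
  qed
qed


lemma finite_le:
  assumes "finite (supp c)"
  shows "finite {a. \<forall>k. a k \<le> c k}"
proof -
  let ?M = "\<Sum>k\<in>supp c. c k"
  have "{a. \<forall>k. a k \<le> c k} \<subseteq> {f. \<forall>x. (x \<in> supp c \<longrightarrow> f x \<in> {..?M}) \<and> (x \<notin> supp c \<longrightarrow> f x = 0)}"
  proof (rule subsetI)
    fix a assume "a \<in> {a. \<forall>k. a k \<le> c k}"
    then have a: "\<forall>k. a k \<le> c k" by simp
    show "a \<in> {f. \<forall>x. (x \<in> supp c \<longrightarrow> f x \<in> {..?M}) \<and> (x \<notin> supp c \<longrightarrow> f x = 0)}"
    proof (simp only: mem_Collect_eq, intro allI conjI impI)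
      fix x assume x: "x \<in> supp c"
      have "c x \<le> ?M" using x assms by (intro member_le_sum) auto
      then show "a x \<in> {..?M}" using a[rule_format, of x] by simp
    next
      fix x assume x: "x \<notin> supp c"
      then show "a x = 0" using a[rule_format, of x] by (simp add: supp_def)
    qed
  qed
  then show ?thesis
    using finite_set_of_finite_funs[OF assms finite_atMost] finite_subset by blast
qed

lemma rep_eq_iff:
  "replicate_mset a (2::nat) + replicate_mset b 1 = replicate_mset a' 2 + replicate_mset b' 1 \<longleftrightarrow>
   a = a' \<and> b = b'"
proof
  assume h: "replicate_mset a (2::nat) + replicate_mset b 1 = replicate_mset a' 2 + replicate_mset b' 1"
  from arg_cong[OF h, of "\<lambda>M. count M 2"] arg_cong[OF h, of "\<lambda>M. count M 1"]
  show "a = a' \<and> b = b'" by simp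
qed simp

lemma msym_val:
  assumes fin: "finite (supp c)" and le: "\<forall>k. c k \<le> 2"
  shows "msym (replicate_mset i 2 + replicate_mset t 1) c =
    (if i = card {k. c k = 2} \<and> t = card {k. c k = 1} then 1 else 0)"
proof -
  let ?I = "{k. c k = 2}" and ?T = "{k. c k = 1}"
  have sc: "supp c = ?I \<union> ?T"
  proof (rule set_eqI)
    fix x show "x \<in> supp c \<longleftrightarrow> x \<in> ?I \<union> ?T" using le[rule_format, of x] by (auto simp: supp_def)
  qed
  have fI: "finite ?I" and fT: "finite ?T" using fin sc by (metis finite_Un)+
  have "image_mset c (mset_set (supp c)) = image_mset c (mset_set ?I) + image_mset c (mset_set ?T)"
    unfolding sc by (subst mset_set_Union[OF fI fT]) auto
  also have "image_mset c (mset_set ?I) = image_mset (\<lambda>_. 2) (mset_set ?I)"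
    by (rule image_mset_cong) (use fI in auto)
  also have "image_mset c (mset_set ?T) = image_mset (\<lambda>_. 1) (mset_set ?T)"
    by (rule image_mset_cong) (use fT in auto)
  finally have "image_mset c (mset_set (supp c)) = replicate_mset (card ?I) 2 + replicate_mset (card ?T) 1"
    by (simp add: image_mset_const_eq)
  then show ?thesis using fin rep_eq_iff by (auto simp: msym_def)
qed

lemma msym_big:
  assumes fin: "finite (supp c)" and k: "c k \<ge> 3"
  shows "msym (replicate_mset i 2 + replicate_mset t 1) c = 0"
proof -
  have "k \<in> supp c" using k by (simp add: supp_def)
  then have "c k \<in># image_mset c (mset_set (supp c))" using fin by simp
  moreover have "c k \<notin># replicate_mset i 2 + replicate_mset t 1" using k by (auto simp: in_replicate_mset)
  ultimately show ?thesis by (metis msym_def)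
qed


lemma LHS_le2:
  assumes fin: "finite (supp c)" and le: "\<forall>k. c k \<le> 2"
  defines "I \<equiv> {k. c k = 2}" and "T \<equiv> {k. c k = 1}"
  shows "diag_subst (GG n m j) c =
    (\<Sum>E\<in>Pow T. GG n m j (ind (I \<union> E)) (ind (I \<union> (T - E))))"
proof -
  have sc: "supp c = I \<union> T"
  proof (rule set_eqI)
    fix x show "x \<in> supp c \<longleftrightarrow> x \<in> I \<union> T" using le[rule_format, of x] by (auto simp: supp_def I_def T_def)
  qed
  have fI: "finite I" and fT: "finite T" using fin sc by (metis finite_Un)+
  have IT: "I \<inter> T = {}" by (auto simp: I_def T_def)
  let ?A = "{a. \<forall>k. a k \<le> c k}"
  let ?e = "\<lambda>E. ind (I \<union> E)"
  have sub: "?e ` Pow T \<subseteq> ?A"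
    by (auto simp: ind_def I_def T_def)
  have inj: "inj_on ?e (Pow T)"
  proof (rule inj_onI)
    fix E E' assume "E \<in> Pow T" "E' \<in> Pow T" "?e E = ?e E'"
    then have "I \<union> E = I \<union> E'" "E \<subseteq> T" "E' \<subseteq> T" by auto
    then show "E = E'" using IT by blast
  qed
  have diff: "(\<lambda>k. c k - ?e E k) = ind (I \<union> (T - E))" if "E \<subseteq> T" for E
  proof
    fix k show "c k - ?e E k = ind (I \<union> (T - E)) k"
      using that le[rule_format, of k] by (auto simp: ind_def I_def T_def)
  qed
  have zero: "GG n m j a (\<lambda>k. c k - a k) = 0" if a: "a \<in> ?A - ?e ` Pow T" for a
  proof (rule ccontr)
    assume nz: "GG n m j a (\<lambda>k. c k - a k) \<noteq> 0"
    then have ia: "isind a" and ib: "isind (\<lambda>k. c k - a k)" by (auto simp: GG_val split: if_splits)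
    have ale: "\<forall>k. a k \<le> c k" using a by auto
    have "supp a = I \<union> (supp a \<inter> T)"
    proof (rule set_eqI)
      fix k
      have "a k \<le> 1" "c k - a k \<le> 1" using ia ib by (auto simp: isind_def)
      then show "k \<in> supp a \<longleftrightarrow> k \<in> I \<union> (supp a \<inter> T)"
        using ale[rule_format, of k] le[rule_format, of k] by (auto simp: supp_def I_def T_def)
    qed
    then have "a = ?e (supp a \<inter> T)" using isind_eq[OF ia] by simp
    then show False using a by blast
  qed
  have "diag_subst (GG n m j) c = (\<Sum>a\<in>?A. GG n m j a (\<lambda>k. c k - a k))"
    by (simp add: diag_subst_def)
  also have "\<dots> = (\<Sum>a\<in>?e ` Pow T. GG n m j a (\<lambda>k. c k - a k))"
    using zero sub finite_le[OF fin] by (intro sum.mono_neutral_right) auto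
  also have "\<dots> = (\<Sum>E\<in>Pow T. GG n m j (?e E) (\<lambda>k. c k - ?e E k))"
    by (rule sum.reindex[OF inj, unfolded comp_def])
  also have "\<dots> = (\<Sum>E\<in>Pow T. GG n m j (ind (I \<union> E)) (ind (I \<union> (T - E))))"
    using diff by (intro sum.cong) auto
  finally show ?thesis .
qed


lemma sumPow:
  assumes fI: "finite I" and fT: "finite T" and IT: "I \<inter> T = {}" and jr: "j \<le> r"
  shows "(\<Sum>E\<in>Pow T. GG (r + s - j) (r - j) j (ind (I \<union> E)) (ind (I \<union> (T - E)))) =
    (if card I \<le> r \<and> card T = 2 * (r - card I) + s
     then fact (r + s - j) * fact (r - j) * of_nat (card I choose j) * of_nat (card T choose (r - card I)) else 0)"
proof -
  let ?K = "fact (r + s - j) * fact (r - j) * of_nat (card I choose j) :: int"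
  let ?P = "\<lambda>E. r = card I + (card T - card E) \<and> r + s = card I + card E"
  have tm: "GG (r + s - j) (r - j) j (ind (I \<union> E)) (ind (I \<union> (T - E))) = (if ?P E then ?K else 0)"
    if E: "E \<in> Pow T" for E
  proof -
    have ET: "E \<subseteq> T" using E by simp
    have fE: "finite E" using ET fT finite_subset by blast
    have int: "(I \<union> E) \<inter> (I \<union> (T - E)) = I" using IT ET by blast
    have c1: "card (I \<union> E) = card I + card E" using IT ET fI fE by (subst card_Un_disjoint) auto
    have c2: "card (I \<union> (T - E)) = card I + (card T - card E)"
      using IT ET fI fT fE by (subst card_Un_disjoint) (auto simp: card_Diff_subset)
    show ?thesis using jr fI fT fE unfolding GG_val by (simp add: int c1 c2)
  qed
  have finP: "finite (Pow T)" using fT by simp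
  have "(\<Sum>E\<in>Pow T. GG (r + s - j) (r - j) j (ind (I \<union> E)) (ind (I \<union> (T - E)))) =
        (\<Sum>E\<in>Pow T. if ?P E then ?K else 0)"
    using tm by (rule sum.cong[OF refl])
  also have "\<dots> = (\<Sum>E\<in>{E \<in> Pow T. ?P E}. ?K)"
    unfolding sum.inter_filter[OF finP] ..
  also have "{E \<in> Pow T. ?P E} = (if card I \<le> r \<and> card T = 2 * (r - card I) + s
       then {E. E \<subseteq> T \<and> card E = r + s - card I} else {})"
  proof -
    have "E \<in> {E \<in> Pow T. ?P E} \<longleftrightarrow> E \<in> (if card I \<le> r \<and> card T = 2 * (r - card I) + s
       then {E. E \<subseteq> T \<and> card E = r + s - card I} else {})" for E
    proof (cases "E \<subseteq> T")
      case True
      then have "card E \<le> card T" using fT by (rule card_mono[rotated])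
      then show ?thesis using True by auto
    qed auto
    then show ?thesis by blast
  qed
  finally show ?thesis
  proof -
    assume h: "(\<Sum>E\<in>Pow T. GG (r + s - j) (r - j) j (ind (I \<union> E)) (ind (I \<union> (T - E)))) =
       (\<Sum>E\<in>(if card I \<le> r \<and> card T = 2 * (r - card I) + s
       then {E. E \<subseteq> T \<and> card E = r + s - card I} else {}). ?K)"
    show ?thesis
    proof (cases "card I \<le> r \<and> card T = 2 * (r - card I) + s")
      case True
      have "card T choose (r + s - card I) = card T choose (r - card I)"
      proof -
        have "card T - (r - card I) = r + s - card I" using True by arith
        then show ?thesis using True binomial_symmetric[of "r - card I" "card T"] by simp
      qed
      then show ?thesis using h True n_subsets[OF fT, of "r + s - card I"] by simp
    next
      case False then show ?thesis using h by (simp only: if_False card.empty) simp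
    qed
  qed
qed


theorem mainTheorem6:
  fixes r s j :: nat and c :: "nat \<Rightarrow> nat"
  assumes "j \<le> r" and "finite (supp c)"
  shows "diag_subst ((Xop ^^ (r + s - j)) ((Yop ^^ (r - j)) (m1_xy j))) c =
    (\<Sum>i\<in>{j..r}. int ((i choose j) * ((2 * (r - i) + s) choose (r - i))
                    * fact (r - j) * fact (r + s - j))
       * msym (replicate_mset i 2 + replicate_mset (2 * (r - i) + s) 1) c)"
proof -
  note jr = assms(1) and fin = assms(2)
  let ?coef = "\<lambda>i. int ((i choose j) * ((2 * (r - i) + s) choose (r - i)) * fact (r - j) * fact (r + s - j))"
  have L: "diag_subst ((Xop ^^ (r + s - j)) ((Yop ^^ (r - j)) (m1_xy j))) c = diag_subst (GG (r + s - j) (r - j) j) c"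
    by (simp add: GG_def)
  show ?thesis
  proof (cases "\<forall>k. c k \<le> 2")
    case True
    note le = True
    define I where "I = {k. c k = 2}"
    define T where "T = {k. c k = 1}"
    have sc: "supp c = I \<union> T"
    proof (rule set_eqI)
      fix x show "x \<in> supp c \<longleftrightarrow> x \<in> I \<union> T" using le[rule_format, of x] by (auto simp: supp_def I_def T_def)
    qed
    have fI: "finite I" and fT: "finite T" using fin sc by (metis finite_Un)+
    have IT: "I \<inter> T = {}" by (auto simp: I_def T_def)
    have lhs: "diag_subst ((Xop ^^ (r + s - j)) ((Yop ^^ (r - j)) (m1_xy j))) c =
      (if card I \<le> r \<and> card T = 2 * (r - card I) + s
     then fact (r + s - j) * fact (r - j) * of_nat (card I choose j) * of_nat (card T choose (r - card I)) else 0)"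
      unfolding L LHS_le2[OF fin le] I_def[symmetric] T_def[symmetric]
      by (rule sumPow[OF fI fT IT jr])
    have mv: "\<And>i t. msym (replicate_mset i 2 + replicate_mset t 1) c = (if i = card I \<and> t = card T then 1 else 0)"
      unfolding I_def T_def by (rule msym_val[OF fin le])
    have "(\<Sum>i\<in>{j..r}. ?coef i * msym (replicate_mset i 2 + replicate_mset (2 * (r - i) + s) 1) c)
        = (\<Sum>i\<in>{j..r}. if i = card I then ?coef i * (if 2 * (r - i) + s = card T then 1 else 0) else 0)"
      unfolding mv by (intro sum.cong) auto
    also have "\<dots> = (if card I \<in> {j..r} then ?coef (card I) * (if 2 * (r - card I) + s = card T then 1 else 0) else 0)"
      by (rule sum.delta) simp
    finally have rhs: "(\<Sum>i\<in>{j..r}. ?coef i * msym (replicate_mset i 2 + replicate_mset (2 * (r - i) + s) 1) c)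
      = (if card I \<in> {j..r} then ?coef (card I) * (if 2 * (r - card I) + s = card T then 1 else 0) else 0)" .
    show ?thesis unfolding lhs rhs
      by (cases "card I < j") (auto simp: of_nat_mult)
  next
    case False
    then obtain k where k0: "c k > 2" by (auto simp: not_le)
    then have k: "c k \<ge> 3" by simp
    have "diag_subst (GG (r + s - j) (r - j) j) c = 0"
      unfolding diag_subst_def
    proof (rule sum.neutral, rule ballI)
      fix a assume a: "a \<in> {a. \<forall>k. a k \<le> c k}"
      show "GG (r + s - j) (r - j) j a (\<lambda>k. c k - a k) = 0"
      proof (rule ccontr)
        assume "GG (r + s - j) (r - j) j a (\<lambda>k. c k - a k) \<noteq> 0"
        then have ia: "isind a" and ib: "isind (\<lambda>k. c k - a k)" by (auto simp: GG_val split: if_splits)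
        have "a k \<le> 1" "c k - a k \<le> 1" using ia ib by (auto simp: isind_def)
        then show False using k by simp
      qed
    qed
    moreover have "(\<Sum>i\<in>{j..r}. ?coef i * msym (replicate_mset i 2 + replicate_mset (2 * (r - i) + s) 1) c) = 0"
      using msym_big[OF fin k] by simp
    ultimately show ?thesis using L by simp
  qed
qed

end
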